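(* Let $\alpha>0$, $\nu:=\nu(\alpha)$, and let $(a_n)_{n\ge1}$ be a positive sequence with $\lim_{n\to\infty}a_ne^{-\nu n}=0$. Let $(\chi_t)_{t\ge1}$ be defined by $\chi_t:=\max\{a_t,\frac{t-1}{\alpha}\chi_1,\dots,\frac1\alpha\chi_{t-1}\}$. For $t\ge1$ and integers $i$, set $\tilde\chi_i(t):=-\infty$ if $i<0$, $\tilde\chi_0(t):=a_t$, and $\tilde\chi_i(t):=(t-i)\chi_i/\alpha$ for $1\le i\le t-1$, and define $$I_t:=\max\{i<t:\ \chi_t=\tilde\chi_i(t)\}.$$ Then $\sup_{t\ge1}(t-I_t)<\infty$.
   Context: For $\alpha>0$, let $T=T(\alpha)\in\mathbb N$ be the unique positive integer with $\frac{(T-1)^T}{T^{T-1}}<\alpha\le\frac{T^{T+1}}{(T+1)^T}$, and define $\nu(\alpha):=\frac1T\log\frac T\alpha$. *)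

theory Defs
  imports Complex_Main
begin

definition T_of :: "real \<Rightarrow> nat" where
  "T_of \<alpha> = (THE T. T \<ge> 1 \<and>
      real (T - 1) ^ T / real T ^ (T - 1) < \<alpha> \<and>
      \<alpha> \<le> real T ^ (T + 1) / real (T + 1) ^ T)"

definition nu :: "real \<Rightarrow> real" where
  "nu \<alpha> = (1 / real (T_of \<alpha>)) * ln (real (T_of \<alpha>) / \<alpha>)"

text \<open>tilde chi_i(t) for 0 <= i < t (for i < 0 it is -infinity and never
  attains the (finite) maximum chi_t, so negative indices are omitted).\<close>
definition chi_tilde :: "real \<Rightarrow> (nat \<Rightarrow> real) \<Rightarrow> (nat \<Rightarrow> real) \<Rightarrow> nat \<Rightarrow> nat \<Rightarrow> real" where
  "chi_tilde \<alpha> a chi i t = (if i = 0 then a t else real (t - i) * chi i / \<alpha>)"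

definition I_idx :: "real \<Rightarrow> (nat \<Rightarrow> real) \<Rightarrow> (nat \<Rightarrow> real) \<Rightarrow> nat \<Rightarrow> nat" where
  "I_idx \<alpha> a chi t = Max {i. i < t \<and> chi t = chi_tilde \<alpha> a chi i t}"

end

theory Submission
  imports Defs
begin

lemma chi_lower:
  fixes chi :: "nat \<Rightarrow> real" and \<alpha> c :: real and S :: nat
  assumes S: "S \<ge> 1" and ap: "\<alpha> > 0" and c: "c > 0"
    and base: "\<And>t. 1 \<le> t \<Longrightarrow> t \<le> S \<Longrightarrow> chi t \<ge> c"
    and step: "\<And>t. t > S \<Longrightarrow> chi t \<ge> real S / \<alpha> * chi (t - S)"
  shows "t \<ge> 1 \<Longrightarrow> chi t \<ge> c * (real S / \<alpha>) ^ ((t - 1) div S)"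
proof (induction t rule: less_induct)
  case (less t)
  show ?case
  proof (cases "t \<le> S")
    case True
    then have "(t - 1) div S = 0" using less.prems by auto
    then show ?thesis using base[OF less.prems True] by simp
  next
    case False
    have r0: "real S / \<alpha> \<ge> 0" using ap by simp
    have IH: "chi (t - S) \<ge> c * (real S / \<alpha>) ^ ((t - S - 1) div S)"
      using less.IH[of "t - S"] False S by auto
    have q: "(t - 1) div S = Suc ((t - S - 1) div S)"
    proof -
      have h: "t - 1 = (t - S - 1) + S" using False by auto
      have S0: "S \<noteq> 0" using S by simp
      show ?thesis unfolding h div_add_self2[OF S0] by simp
    qed
    have A: "chi t \<ge> real S / \<alpha> * chi (t - S)" using step False by auto
    have B: "real S / \<alpha> * chi (t - S) \<ge> real S / \<alpha> * (c * (real S / \<alpha>) ^ ((t - S - 1) div S))"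
      by (rule mult_left_mono[OF IH r0])
    have "real S / \<alpha> * (c * (real S / \<alpha>) ^ ((t - S - 1) div S)) \<le> chi t" using A B by linarith
    then show ?thesis using q by (simp add: mult_ac)
  qed
qed

lemma pow_vs_exp:
  fixes r :: real and S t :: nat
  assumes r: "r > 0" and S: "S \<ge> 1" and t: "t \<ge> 1"
  shows "r ^ ((t - 1) div S) \<ge> min 1 (1 / r) * exp (ln r / real S * real t)"
proof -
  define q where "q = (t - 1) div S"
  have n1: "q * S \<le> t - 1" unfolding q_def by (metis div_mult_mod_eq le_add1)
  have n2: "t - 1 < q * S + S" unfolding q_def
    using S by (metis add_less_cancel_left div_mult_mod_eq mod_less_divisor not_one_le_zero zero_less_iff_neq_zero)
  have Sr: "real S > 0" using S by simp
  have r1: "real q * real S \<le> real t - 1" using n1 t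
    by (metis of_nat_1 of_nat_diff of_nat_le_iff of_nat_mult)
  have n2': "t \<le> q * S + S" using n2 t by linarith
  have r2: "real t \<le> real q * real S + real S" using n2'
    by (metis of_nat_add of_nat_le_iff of_nat_mult)
  define d where "d = real q - real t / real S"
  have d1: "d \<le> 0" unfolding d_def using r1 Sr by (simp add: field_simps)
  have d2: "d \<ge> -1" unfolding d_def using r2 Sr by (simp add: field_simps)
  have e: "exp (ln r / real S * real t) = r powr (real t / real S)"
    using r by (simp add: powr_def)
  have pq: "r ^ q = r powr (real t / real S) * r powr d"
    using r by (simp add: d_def powr_realpow[symmetric] powr_add[symmetric])
  have md: "r powr d \<ge> min 1 (1 / r)"
  proof (cases "r \<ge> 1")
    case True
    have "r powr (-1) \<le> r powr d" using powr_mono[OF d2 True] .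
    then show ?thesis using r by (simp add: powr_minus_divide)
  next
    case False
    have "r powr 0 \<le> r powr d" using powr_mono'[OF d1, of r] r False by simp
    then show ?thesis using r by simp
  qed
  have "min 1 (1 / r) * r powr (real t / real S) \<le> r powr d * r powr (real t / real S)"
    by (rule mult_right_mono[OF md]) simp
  then show ?thesis using e pq unfolding q_def[symmetric] by (simp add: mult.commute)
qed

theorem lemma5:
  fixes \<alpha> :: real and a chi :: "nat \<Rightarrow> real"
  assumes alpha_pos: "\<alpha> > 0"
    and a_pos: "\<And>n. n \<ge> 1 \<Longrightarrow> a n > 0"
    and a_lim: "(\<lambda>n. a n * exp (- nu \<alpha> * real n)) \<longlonglongrightarrow> 0"
    and chi_def: "\<And>t. t \<ge> 1 \<Longrightarrow>
        chi t = Max ({a t} \<union> {real (t - i) / \<alpha> * chi i | i. 1 \<le> i \<and> i < t})"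
  shows "\<exists>B. \<forall>t\<ge>1. t - I_idx \<alpha> a chi t \<le> B"
proof -
  have setfin: "finite ({a t} \<union> {real (t - i) / \<alpha> * chi i | i. 1 \<le> i \<and> i < t})" for t
  proof -
    have "finite {real (t - i) / \<alpha> * chi i | i. 1 \<le> i \<and> i < t}"
      by (rule finite_image_set) simp
    then show ?thesis by simp
  qed
  have ge: "chi t \<ge> real (t - i) / \<alpha> * chi i" if "1 \<le> i" "i < t" for t i
  proof -
    have "t \<ge> 1" using that by simp
    have "real (t - i) / \<alpha> * chi i \<in> {a t} \<union> {real (t - i) / \<alpha> * chi i | i. 1 \<le> i \<and> i < t}"
      using that by blast
    from Max_ge[OF setfin this] show ?thesis using chi_def[OF \<open>t \<ge> 1\<close>] by linarith
  qed
  have ge_a: "chi t \<ge> a t" if "t \<ge> 1" for t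
  proof -
    have "a t \<in> {a t} \<union> {real (t - i) / \<alpha> * chi i | i. 1 \<le> i \<and> i < t}" by blast
    from Max_ge[OF setfin this] show ?thesis using chi_def[OF that] by linarith
  qed
  have mem: "chi t = a t \<or> (\<exists>i. 1 \<le> i \<and> i < t \<and> chi t = real (t - i) / \<alpha> * chi i)"
    if "t \<ge> 1" for t
  proof -
    have "Max ({a t} \<union> {real (t - i) / \<alpha> * chi i | i. 1 \<le> i \<and> i < t})
       \<in> {a t} \<union> {real (t - i) / \<alpha> * chi i | i. 1 \<le> i \<and> i < t}"
      using setfin[of t] by (intro Max_in) auto
    then show ?thesis unfolding chi_def[OF that, symmetric] by blast
  qed
  have chipos: "chi t > 0" if "t \<ge> 1" for t using ge_a[OF that] a_pos[OF that] by linarith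
  define S where "S = (if T_of \<alpha> \<ge> 1 then T_of \<alpha> else nat \<lceil>\<alpha>\<rceil> + 1)"
  have S1: "S \<ge> 1" unfolding S_def by auto
  define r where "r = real S / \<alpha>"
  have rpos: "r > 0" unfolding r_def using S1 alpha_pos by simp
  have nu_le: "nu \<alpha> \<le> ln r / real S"
  proof (cases "T_of \<alpha> \<ge> 1")
    case True
    then show ?thesis unfolding nu_def r_def S_def by simp
  next
    case False
    then have T0: "T_of \<alpha> = 0" by simp
    have "real S = real (nat \<lceil>\<alpha>\<rceil>) + 1" unfolding S_def using False by simp
    then have "real S \<ge> \<alpha>" using real_nat_ceiling_ge[of \<alpha>] by linarith
    then have "r \<ge> 1" unfolding r_def using alpha_pos by simp
    then have "ln r \<ge> 0" by simp
    then show ?thesis unfolding nu_def T0 using S1 by simp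
  qed
  define c where "c = Min (a ` {1..S})"
  have cpos: "c > 0" unfolding c_def using S1 a_pos by (subst Min_gr_iff) auto
  have low: "chi t \<ge> c * r ^ ((t - 1) div S)" if "t \<ge> 1" for t
    unfolding r_def
  proof (rule chi_lower[OF S1 alpha_pos cpos _ _ that])
    fix t assume "1 \<le> t" "t \<le> S"
    then have "c \<le> a t" unfolding c_def by (intro Min_le) auto
    then show "c \<le> chi t" using ge_a[OF \<open>1 \<le> t\<close>] by linarith
  next
    fix t assume "S < t"
    then have "real (t - (t - S)) / \<alpha> * chi (t - S) \<le> chi t" using S1 by (intro ge) auto
    then show "real S / \<alpha> * chi (t - S) \<le> chi t" using \<open>S < t\<close> by simp
  qed
  define K where "K = c * min 1 (1 / r)"
  have Kpos: "K > 0" unfolding K_def using cpos rpos by simp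
  have low2: "chi t \<ge> K * exp (nu \<alpha> * real t)" if "t \<ge> 1" for t
  proof -
    have "exp (nu \<alpha> * real t) \<le> exp (ln r / real S * real t)"
      using nu_le by (intro exp_mono mult_right_mono) auto
    then have "K * exp (nu \<alpha> * real t) \<le> c * (min 1 (1 / r) * exp (ln r / real S * real t))"
      unfolding K_def using cpos rpos by (simp add: mult_left_mono)
    also have "\<dots> \<le> c * r ^ ((t - 1) div S)"
      using pow_vs_exp[OF rpos S1 that] cpos by (simp add: mult_left_mono)
    also have "\<dots> \<le> chi t" using low[OF that] .
    finally show ?thesis .
  qed
  have "eventually (\<lambda>n. a n * exp (- nu \<alpha> * real n) < K) sequentially"
    using order_tendstoD(2)[OF a_lim Kpos] .
  then obtain N where N: "\<And>n. n \<ge> N \<Longrightarrow> a n * exp (- nu \<alpha> * real n) < K"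
    unfolding eventually_sequentially by blast
  have nota: "chi t \<noteq> a t" if "t \<ge> N" "t \<ge> 1" for t
  proof -
    have "a t * exp (- nu \<alpha> * real t) < K" using N[OF that(1)] .
    then have "a t < K * exp (nu \<alpha> * real t)"
      by (simp add: exp_minus field_simps)
    then show ?thesis using low2[OF that(2)] by linarith
  qed
  define B where "B = max N (nat \<lceil>4 * \<alpha> + 1\<rceil>)"
  have "t - I_idx \<alpha> a chi t \<le> B" if t1: "t \<ge> 1" for t
  proof (cases "t < N")
    case True then show ?thesis unfolding B_def by simp
  next
    case False
    then have tN: "t \<ge> N" by simp
    define A where "A = {i. i < t \<and> chi t = chi_tilde \<alpha> a chi i t}"
    have Afin: "finite A" unfolding A_def by simp
    obtain i0 where i0: "1 \<le> i0" "i0 < t" "chi t = real (t - i0) / \<alpha> * chi i0"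
      using mem[OF t1] nota[OF tN t1] by blast
    have "i0 \<in> A" unfolding A_def chi_tilde_def using i0 by simp
    then have Ane: "A \<noteq> {}" by auto
    have IA: "I_idx \<alpha> a chi t \<in> A" unfolding I_idx_def A_def[symmetric]
      using Afin Ane by (rule Max_in)
    define i where "i = I_idx \<alpha> a chi t"
    have it: "i < t" "chi t = chi_tilde \<alpha> a chi i t" using IA unfolding A_def i_def by auto
    have i1: "i \<ge> 1"
    proof (rule ccontr)
      assume "\<not> i \<ge> 1" then have "i = 0" by simp
      then show False using it nota[OF tN t1] unfolding chi_tilde_def by simp
    qed
    have eq: "chi t = real (t - i) / \<alpha> * chi i" using it i1 unfolding chi_tilde_def by simp
    define k where "k = t - i"
    have "k \<le> nat \<lceil>4 * \<alpha> + 1\<rceil>"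
    proof (rule ccontr)
      assume "\<not> k \<le> nat \<lceil>4 * \<alpha> + 1\<rceil>"
      then have kbig: "real k > 4 * \<alpha> + 1" by linarith
      define m where "m = k div 2"
      have k2: "k \<ge> 2" using kbig alpha_pos by linarith
      have m1: "m \<ge> 1" unfolding m_def using k2 by simp
      have mk: "m < k" unfolding m_def using k2 by simp
      define j where "j = i + m"
      have j1: "1 \<le> j" "i < j" "j < t" unfolding j_def k_def using m1 mk i1 it k_def by auto
      have cj: "chi j \<ge> real m / \<alpha> * chi i" using ge[OF i1 j1(2)] unfolding j_def by simp
      have ct: "chi t \<ge> real (k - m) / \<alpha> * chi j" using ge[OF j1(1) j1(3)]
        unfolding j_def k_def by (simp add: diff_diff_add)
      have cip: "chi i > 0" using chipos[OF i1] .
      have rm: "2 * real m \<ge> real k - 1" unfolding m_def by linarith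
      have rkm: "2 * real (k - m) \<ge> real k" using mk unfolding m_def by linarith
      have prod: "real (k - m) * real m > real k * \<alpha>"
      proof -
        have "4 * (real (k - m) * real m) \<ge> real k * (real k - 1)"
          using mult_mono[OF rkm rm] kbig alpha_pos by (simp add: algebra_simps)
        moreover have "real k * (real k - 1) > real k * (4 * \<alpha>)"
          using kbig alpha_pos by (intro mult_strict_left_mono) auto
        ultimately show ?thesis by linarith
      qed
      have C1: "chi t \<ge> real (k - m) / \<alpha> * (real m / \<alpha> * chi i)"
        using ct cj alpha_pos by (smt (verit) divide_nonneg_nonneg mult_left_mono of_nat_0_le_iff)
      have E1: "real (k - m) / \<alpha> * (real m / \<alpha> * chi i)
          = (real (k - m) * real m) * chi i / \<alpha>^2" by (simp add: power2_eq_square)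
      have C2: "(real (k - m) * real m) * chi i / \<alpha>^2 > (real k * \<alpha>) * chi i / \<alpha>^2"
        using prod cip alpha_pos by (intro divide_strict_right_mono mult_strict_right_mono) auto
      have E2: "(real k * \<alpha>) * chi i / \<alpha>^2 = chi t"
        using eq alpha_pos unfolding k_def by (simp add: power2_eq_square field_simps)
      show False using C1 E1 C2 E2 by linarith
    qed
    then show ?thesis unfolding B_def k_def i_def by simp
  qed
  then show ?thesis by blast
qed

end
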